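(* Let $(I,\preceq)$ be a finite poset with $|I|=n$. For each $i\in I$ let $X_i$ be a finite set with $|X_i|\geq 2$, and let $P_i=(p_i(x_i,y_i))_{x_i,y_i\in X_i}$ be an arbitrary Markov chain (stochastic matrix) on $X_i$. Let $\{p_i^0\}_{i\in I}$ be a strict probability measure on $I$, and let $\mathcal{P}$ be the generalized crested product of the $P_i$ defined by $(I,\preceq)$ and $\{p_i^0\}$. Let $R\subseteq I$, and let $\mathcal{L}=\{L_1,\ldots,L_t\}$ be the partition of $X=\prod_{i\in I}X_i$ into the classes of the equivalence relation $x\sim y \iff x_i=y_i$ for all $i\in I\setminus R$. Then $\mathcal{P}$ is lumpable with respect to $\mathcal{L}$, i.e. for all $k,s\in\{1,\ldots,t\}$ the function $x\mapsto \mathcal{P}(x,L_s)=\sum_{y\in L_s}p(x,y)$ is constant on $L_k$.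
   Context: For $i\in I$, $H(i)=\{j\in I: j\prec i\}$ and $H[i]=H(i)\sqcup\{i\}$. A strict probability measure on $I$ means $p_i^0>0$ for all $i$ and $\sum_i p_i^0=1$. The generalized crested product is the Markov chain on $X=\prod_{i\in I}X_i$ with transition probabilities $$p(x,y)=\sum_{i\in I}p_i^0\,p_i(x_i,y_i)\prod_{j\in H(i)}\frac{1}{|X_j|}\prod_{j\notin H[i]}\delta(x_j,y_j),$$ where $\delta$ is the Kronecker delta; equivalently its operator is $\sum_{i\in I}p_i^0\,P_i\otimes(\bigotimes_{j\in H(i)}U_j)\otimes(\bigotimes_{j\notin H[i]}I_j)$ with $U_j$ the uniform operator (all entries $1/|X_j|$) and $I_j$ the identity on $X_j$. A Markov chain with transition matrix $p$ on a finite set $X$ is lumpable with respect to a partition $\{L_1,\dots,L_t\}$ of $X$ if for all $k,s$ the map $x\mapsto\sum_{y\in L_s}p(x,y)$ is constant on $L_k$. *)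

theory Defs
  imports Complex_Main "HOL-Library.FuncSet"
begin

definition below :: "'i set \<Rightarrow> ('i \<Rightarrow> 'i \<Rightarrow> bool) \<Rightarrow> 'i \<Rightarrow> 'i set" where
  "below I le i = {j \<in> I. le j i \<and> j \<noteq> i}"

definition crested_product ::
  "'i set \<Rightarrow> ('i \<Rightarrow> 'i \<Rightarrow> bool) \<Rightarrow> ('i \<Rightarrow> 'a set) \<Rightarrow> ('i \<Rightarrow> 'a \<Rightarrow> 'a \<Rightarrow> real)
    \<Rightarrow> ('i \<Rightarrow> real) \<Rightarrow> ('i \<Rightarrow> 'a) \<Rightarrow> ('i \<Rightarrow> 'a) \<Rightarrow> real" where
  "crested_product I le X P p0 x y =
     (\<Sum>i\<in>I. p0 i * P i (x i) (y i)
        * (\<Prod>j\<in>below I le i. 1 / real (card (X j)))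
        * (\<Prod>j\<in>I - insert i (below I le i). if x j = y j then 1 else 0))"

definition lumpable :: "('s \<Rightarrow> 's \<Rightarrow> real) \<Rightarrow> 's set set \<Rightarrow> bool" where
  "lumpable p Ls \<longleftrightarrow>
     (\<forall>Lk\<in>Ls. \<forall>Ls'\<in>Ls. \<forall>x\<in>Lk. \<forall>x'\<in>Lk. (\<Sum>y\<in>Ls'. p x y) = (\<Sum>y\<in>Ls'. p x' y))"

definition agree_off :: "'i set \<Rightarrow> ('i \<Rightarrow> 'a set) \<Rightarrow> 'i set \<Rightarrow> (('i \<Rightarrow> 'a) \<times> ('i \<Rightarrow> 'a)) set" where
  "agree_off I X R = {(x, y). x \<in> PiE I X \<and> y \<in> PiE I X \<and> (\<forall>i\<in>I - R. x i = y i)}"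

end

theory Submission
  imports Defs
begin

lemma term_fact:
  fixes I :: "'i set"
  assumes finI: "finite I" and iI: "i \<in> I"
  shows "p0 i * P i (x i) (y i) * (\<Prod>j\<in>below I le i. 1 / real (card (X j)))
        * (\<Prod>j\<in>I - insert i (below I le i). if x j = y j then 1 else 0)
   = p0 i * (\<Prod>j\<in>below I le i. 1 / real (card (X j))) *
     (\<Prod>j\<in>I. (\<lambda>j b. if j = i then P i (x i) b else if j \<in> below I le i then 1
                 else (if x j = b then 1 else 0)) j (y j))"
proof -
  let ?F = "(\<lambda>j b. if j = i then P i (x i) b else if j \<in> below I le i then 1
                 else (if x j = b then 1 else (0::real)))"
  have sub: "insert i (below I le i) \<subseteq> I" using iI by (auto simp: below_def)
  have ni: "i \<notin> below I le i" by (auto simp: below_def)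
  have fb: "finite (below I le i)" using finI by (auto simp: below_def)
  have "(\<Prod>j\<in>I. ?F j (y j)) = (\<Prod>j\<in>I - insert i (below I le i). ?F j (y j)) *
        (\<Prod>j\<in>insert i (below I le i). ?F j (y j))"
    by (rule prod.subset_diff[OF sub finI])
  also have "(\<Prod>j\<in>insert i (below I le i). ?F j (y j)) = P i (x i) (y i)"
    using ni fb by (simp add: prod.insert) (rule disjI2, rule prod.neutral, auto)
  also have "(\<Prod>j\<in>I - insert i (below I le i). ?F j (y j)) =
       (\<Prod>j\<in>I - insert i (below I le i). if x j = y j then 1 else 0)"
    by (rule prod.cong) auto
  finally show ?thesis by (simp add: algebra_simps)
qed

theorem theorem3:
  fixes I :: "'i set" and le :: "'i \<Rightarrow> 'i \<Rightarrow> bool"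
    and X :: "'i \<Rightarrow> 'a set" and P :: "'i \<Rightarrow> 'a \<Rightarrow> 'a \<Rightarrow> real"
    and p0 :: "'i \<Rightarrow> real" and R :: "'i set"
  assumes finI: "finite I"
    and refl: "\<And>i. i \<in> I \<Longrightarrow> le i i"
    and antisym: "\<And>i j. i \<in> I \<Longrightarrow> j \<in> I \<Longrightarrow> le i j \<Longrightarrow> le j i \<Longrightarrow> i = j"
    and trans: "\<And>i j k. i \<in> I \<Longrightarrow> j \<in> I \<Longrightarrow> k \<in> I \<Longrightarrow> le i j \<Longrightarrow> le j k \<Longrightarrow> le i k"
    and finX: "\<And>i. i \<in> I \<Longrightarrow> finite (X i)"
    and cardX: "\<And>i. i \<in> I \<Longrightarrow> card (X i) \<ge> 2"
    and P_nonneg: "\<And>i a b. i \<in> I \<Longrightarrow> a \<in> X i \<Longrightarrow> b \<in> X i \<Longrightarrow> P i a b \<ge> 0"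
    and P_stoch: "\<And>i a. i \<in> I \<Longrightarrow> a \<in> X i \<Longrightarrow> (\<Sum>b\<in>X i. P i a b) = 1"
    and p0_pos: "\<And>i. i \<in> I \<Longrightarrow> p0 i > 0"
    and p0_sum: "(\<Sum>i\<in>I. p0 i) = 1"
    and R_sub: "R \<subseteq> I"
  shows "lumpable (crested_product I le X P p0) (PiE I X // agree_off I X R)"
proof -
  define F where "F = (\<lambda>i x j b. if j = i then P i (x i) b else if j \<in> below I le i then 1
                 else (if x j = b then 1 else (0::real)))"
  define c where "c = (\<lambda>i. p0 i * (\<Prod>j\<in>below I le i. 1 / real (card (X j))))"
  have key: "(\<Sum>y\<in>L. crested_product I le X P p0 x y) = (\<Sum>y\<in>L. crested_product I le X P p0 x' y)"
    if x: "x \<in> PiE I X" and x': "x' \<in> PiE I X" and agr: "\<forall>j\<in>I - R. x j = x' j"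
      and L: "L = PiE I D" and D: "D = (\<lambda>j. if j \<in> R then X j else {w j})"
    for x x' L D w
  proof -
    have finD: "\<And>j. j \<in> I \<Longrightarrow> finite (D j)" using finX by (auto simp: D)
    have step: "(\<Sum>y\<in>L. crested_product I le X P p0 z y) =
        (\<Sum>i\<in>I. c i * (\<Prod>j\<in>I. \<Sum>b\<in>D j. F i z j b))" for z
    proof -
      have "(\<Sum>y\<in>L. crested_product I le X P p0 z y) =
          (\<Sum>i\<in>I. \<Sum>y\<in>L. c i * (\<Prod>j\<in>I. F i z j (y j)))"
        unfolding crested_product_def
        by (subst sum.swap, rule sum.cong, simp, rule sum.cong, simp,
            simp add: term_fact[OF finI] c_def F_def)
      also have "\<dots> = (\<Sum>i\<in>I. c i * (\<Prod>j\<in>I. \<Sum>b\<in>D j. F i z j b))"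
        by (rule sum.cong, simp, simp add: L sum_distrib_left[symmetric]
            prod_sum_PiE[OF finI finD])
      finally show ?thesis .
    qed
    have fac: "(\<Sum>b\<in>D j. F i x j b) = (\<Sum>b\<in>D j. F i x' j b)" if iI: "i \<in> I" and jI: "j \<in> I" for i j
    proof (cases "j \<in> R")
      case False
      then have "x j = x' j" using agr jI by auto
      then have "F i x j = F i x' j" unfolding F_def by (auto intro!: ext)
      then show ?thesis by simp
    next
      case True
      then have Dj: "D j = X j" by (simp add: D)
      have xj: "x j \<in> X j" "x' j \<in> X j" using x x' jI by auto
      have d1: "(\<Sum>b\<in>X j. if z = b then 1 else (0::real)) = 1" if "z \<in> X j" for z
        using that finX[OF jI] by (simp add: sum.delta)
      show ?thesis
      proof (cases "j = i")
        case True
        then show ?thesis using Dj xj P_stoch iI by (simp add: F_def)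
      next
        case ne: False
        show ?thesis
        proof (cases "j \<in> below I le i")
          case True then show ?thesis using ne by (simp add: F_def)
        next
          case False then show ?thesis using ne Dj d1 xj by (simp add: F_def)
        qed
      qed
    qed
    show ?thesis unfolding step
      by (rule sum.cong, simp, simp, rule disjI2, rule prod.cong, simp, rule fac, auto)
  qed
  show ?thesis
    unfolding lumpable_def
  proof (intro ballI)
    fix Lk Ls' x x'
    assume Lk: "Lk \<in> PiE I X // agree_off I X R" and Ls': "Ls' \<in> PiE I X // agree_off I X R"
      and x: "x \<in> Lk" and x': "x' \<in> Lk"
    obtain z where z: "z \<in> PiE I X" and Lkz: "Lk = agree_off I X R `` {z}"
      using Lk by (auto simp: quotient_def)
    obtain w where w: "w \<in> PiE I X" and Lsw: "Ls' = agree_off I X R `` {w}"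
      using Ls' by (auto simp: quotient_def)
    have xs: "x \<in> PiE I X" "x' \<in> PiE I X" "\<forall>j\<in>I - R. x j = x' j"
      using x x' Lkz by (auto simp: agree_off_def)
    have LD: "Ls' = PiE I (\<lambda>j. if j \<in> R then X j else {w j})"
      using w R_sub unfolding Lsw agree_off_def
      by (auto simp: PiE_def Pi_def extensional_def split: if_splits)
    show "(\<Sum>y\<in>Ls'. crested_product I le X P p0 x y) = (\<Sum>y\<in>Ls'. crested_product I le X P p0 x' y)"
      by (rule key[OF xs LD HOL.refl])
  qed
qed

end
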